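(* Let $(X,Y,Z)$ be a random element whose sample space is partially ordered (with the product order on pairs). If $X\uparrow^{\mathrm{st}}Y$ and $Z$ is independent of $(X,Y)$, then $(X,Z)\uparrow^{\mathrm{st}}Y$ and $(X,Z)\uparrow^{\mathrm{st}}(Y,Z)$.
   Context: For random elements $A,B$ on partially ordered spaces, $A\uparrow^{\mathrm{st}}B$ ($A$ is stochastically increasing in $B$) means that the regular conditional probability $\Pr(A\in\cdot\mid B=b)$ exists and, for every bounded non-decreasing function $h$ of $A$, the map $b\mapsto\mathbb E[h(A)\mid B=b]$ is non-decreasing (i.e. $b\preceq b'$ implies $\mathbb E[h(A)\mid B=b]\le\mathbb E[h(A)\mid B=b']$). *)

theory Defs
  imports "HOL-Probability.Probability" "HOL-Library.Product_Order"
begin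

definition regular_cond_prob ::
  "'w measure \<Rightarrow> 'a measure \<Rightarrow> ('w \<Rightarrow> 'a) \<Rightarrow> 'b measure \<Rightarrow> ('w \<Rightarrow> 'b) \<Rightarrow> ('b \<Rightarrow> 'a measure) \<Rightarrow> bool"
where
  "regular_cond_prob M MA A MB B K \<longleftrightarrow>
     K \<in> MB \<rightarrow>\<^sub>M prob_algebra MA \<and>
     (\<forall>S\<in>sets MA. \<forall>T\<in>sets MB.
        emeasure M {\<omega>\<in>space M. A \<omega> \<in> S \<and> B \<omega> \<in> T}
          = (\<integral>\<^sup>+ b. indicator T b * emeasure (K b) S \<partial>distr M MB B))"

definition stoch_incr ::
  "'w measure \<Rightarrow> 'a::order measure \<Rightarrow> ('w \<Rightarrow> 'a) \<Rightarrow> 'b::order measure \<Rightarrow> ('w \<Rightarrow> 'b) \<Rightarrow> bool"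
where
  "stoch_incr M MA A MB B \<longleftrightarrow>
     (\<exists>K. regular_cond_prob M MA A MB B K \<and>
        (\<forall>h::'a \<Rightarrow> real.
           h \<in> borel_measurable MA \<and> (\<exists>c. \<forall>x\<in>space MA. \<bar>h x\<bar> \<le> c) \<and>
           (\<forall>x\<in>space MA. \<forall>y\<in>space MA. x \<le> y \<longrightarrow> h x \<le> h y) \<longrightarrow>
           (\<forall>b\<in>space MB. \<forall>b'\<in>space MB. b \<le> b' \<longrightarrow>
              (\<integral>x. h x \<partial>K b) \<le> (\<integral>x. h x \<partial>K b'))))"

text \<open>Independence of two random elements with possibly different value types:
independence of the generated sigma-algebras (the preimage families, exactly as in indep_vars_def2) (as in the library's indep_var, which
requires equal value types).\<close>
definition indep_rv ::
  "'w measure \<Rightarrow> 'a measure \<Rightarrow> ('w \<Rightarrow> 'a) \<Rightarrow> 'b measure \<Rightarrow> ('w \<Rightarrow> 'b) \<Rightarrow> bool"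
where
  "indep_rv M MA A MB B \<longleftrightarrow>
     prob_space.indep_set M
       {A -` S \<inter> space M | S. S \<in> sets MA}
       {B -` T \<inter> space M | T. T \<in> sets MB}"

end

theory Submission
  imports Defs
begin


lemma kernel_space:
  assumes "K \<in> MY \<rightarrow>\<^sub>M prob_algebra MX" "y \<in> space MY"
  shows "space (K y) = space MX" "sets (K y) = sets MX" "prob_space (K y)"
proof -
  have "K y \<in> space (prob_algebra MX)" using measurable_space[OF assms] .
  then show "sets (K y) = sets MX" "prob_space (K y)" by (auto simp: space_prob_algebra)
  then show "space (K y) = space MX" by (metis sets_eq_imp_space_eq)
qed

lemma distr_in_prob_algebra:
  assumes "prob_space M" "f \<in> M \<rightarrow>\<^sub>M N"
  shows "distr M N f \<in> space (prob_algebra N)"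
  using assms by (auto simp: space_prob_algebra intro: prob_space.prob_space_distr)

lemma disint:
  assumes M: "prob_space M" and X: "X \<in> M \<rightarrow>\<^sub>M MX" and Y: "Y \<in> M \<rightarrow>\<^sub>M MY"
    and K: "regular_cond_prob M MX X MY Y K"
    and V: "V \<in> sets (MX \<Otimes>\<^sub>M MY)"
  shows "emeasure (distr M (MX \<Otimes>\<^sub>M MY) (\<lambda>\<omega>. (X \<omega>, Y \<omega>))) V
     = (\<integral>\<^sup>+ y. emeasure (K y) {x \<in> space MX. (x, y) \<in> V} \<partial>distr M MY Y)"
proof -
  have Km[measurable]: "K \<in> MY \<rightarrow>\<^sub>M prob_algebra MX" using K unfolding regular_cond_prob_def by blast
  have Kr: "\<And>S T. S \<in> sets MX \<Longrightarrow> T \<in> sets MY \<Longrightarrow> emeasure M {\<omega>\<in>space M. X \<omega> \<in> S \<and> Y \<omega> \<in> T}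
          = (\<integral>\<^sup>+ b. indicator T b * emeasure (K b) S \<partial>distr M MY Y)"
    using K unfolding regular_cond_prob_def by blast
  define F where "F = (\<lambda>y. distr (K y) (MX \<Otimes>\<^sub>M MY) (\<lambda>x. (x, y)))"
  have Fm: "F \<in> MY \<rightarrow>\<^sub>M prob_algebra (MX \<Otimes>\<^sub>M MY)" unfolding F_def by measurable
  have PY: "distr M MY Y \<in> space (prob_algebra MY)" by (rule distr_in_prob_algebra[OF M Y])
  have PXY: "prob_space (distr M (MX \<Otimes>\<^sub>M MY) (\<lambda>\<omega>. (X \<omega>, Y \<omega>)))"
    using M X Y by (intro prob_space.prob_space_distr) auto
  have eF: "emeasure (F y) V' = emeasure (K y) {x \<in> space MX. (x, y) \<in> V'}"
    if "y \<in> space MY" "V' \<in> sets (MX \<Otimes>\<^sub>M MY)" for y V'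
  proof -
    have sp: "space (K y) = space MX" "sets (K y) = sets MX" using kernel_space[OF Km that(1)] by auto
    have m: "(\<lambda>x. (x, y)) \<in> K y \<rightarrow>\<^sub>M MX \<Otimes>\<^sub>M MY"
      using that(1) by (simp add: measurable_cong_sets[OF sp(2) refl])
    have "emeasure (F y) V' = emeasure (K y) ((\<lambda>x. (x, y)) -` V' \<inter> space (K y))"
      unfolding F_def by (rule emeasure_distr[OF m that(2)])
    also have "(\<lambda>x. (x, y)) -` V' \<inter> space (K y) = {x \<in> space MX. (x, y) \<in> V'}"
      using sp(1) by auto
    finally show ?thesis .
  qed
  have eq: "distr M (MX \<Otimes>\<^sub>M MY) (\<lambda>\<omega>. (X \<omega>, Y \<omega>)) = distr M MY Y \<bind> F"
  proof (rule measure_eqI_generator_eq[where \<Omega>="space MX \<times> space MY"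
        and E="{a \<times> b | a b. a \<in> sets MX \<and> b \<in> sets MY}" and A="\<lambda>_. space MX \<times> space MY"])
    show "Int_stable {a \<times> b | a b. a \<in> sets MX \<and> b \<in> sets MY}"
      by (rule Int_stable_pair_measure_generator)
    show "{a \<times> b | a b. a \<in> sets MX \<and> b \<in> sets MY} \<subseteq> Pow (space MX \<times> space MY)"
      using sets.sets_into_space[of _ MX] sets.sets_into_space[of _ MY] by blast
    show "sets (distr M (MX \<Otimes>\<^sub>M MY) (\<lambda>\<omega>. (X \<omega>, Y \<omega>))) = sigma_sets (space MX \<times> space MY) {a \<times> b | a b. a \<in> sets MX \<and> b \<in> sets MY}"
      by (simp add: sets_pair_measure)
    show "sets (distr M MY Y \<bind> F) = sigma_sets (space MX \<times> space MY) {a \<times> b | a b. a \<in> sets MX \<and> b \<in> sets MY}"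
      using sets_bind'[OF PY Fm] by (simp add: sets_pair_measure)
    show "range (\<lambda>_. space MX \<times> space MY) \<subseteq> {a \<times> b | a b. a \<in> sets MX \<and> b \<in> sets MY}" by auto
    show "(\<Union>i. space MX \<times> space MY) = space MX \<times> space MY" by simp
    show "emeasure (distr M (MX \<Otimes>\<^sub>M MY) (\<lambda>\<omega>. (X \<omega>, Y \<omega>))) (space MX \<times> space MY) \<noteq> \<infinity>" for i::nat
      using prob_space.emeasure_space_1[OF PXY] by (simp add: space_pair_measure)
    fix R assume "R \<in> {a \<times> b | a b. a \<in> sets MX \<and> b \<in> sets MY}"
    then obtain S T where R: "R = S \<times> T" and S: "S \<in> sets MX" and T: "T \<in> sets MY" by blast
    have "emeasure (distr M (MX \<Otimes>\<^sub>M MY) (\<lambda>\<omega>. (X \<omega>, Y \<omega>))) R = emeasure M {\<omega>\<in>space M. X \<omega> \<in> S \<and> Y \<omega> \<in> T}"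
      using S T X Y unfolding R by (subst emeasure_distr) (auto intro!: arg_cong2[where f=emeasure])
    also have "\<dots> = (\<integral>\<^sup>+ b. indicator T b * emeasure (K b) S \<partial>distr M MY Y)" by (rule Kr[OF S T])
    also have "\<dots> = (\<integral>\<^sup>+ b. emeasure (F b) R \<partial>distr M MY Y)"
    proof (rule nn_integral_cong)
      fix y assume "y \<in> space (distr M MY Y)"
      then have y: "y \<in> space MY" by simp
      have "{x \<in> space MX. (x, y) \<in> S \<times> T} = (if y \<in> T then S else {})"
        using sets.sets_into_space[OF S] by auto
      then show "indicator T y * emeasure (K y) S = emeasure (F y) R"
        unfolding R using S T by (subst eF[OF y]) auto
    qed
    also have "\<dots> = emeasure (distr M MY Y \<bind> F) R"
      using S T R by (intro emeasure_bind_prob_algebra[symmetric, OF PY Fm]) auto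
    finally show "emeasure (distr M (MX \<Otimes>\<^sub>M MY) (\<lambda>\<omega>. (X \<omega>, Y \<omega>))) R = emeasure (distr M MY Y \<bind> F) R" .
  qed
  show ?thesis
    unfolding eq using V
    by (subst emeasure_bind_prob_algebra[OF PY Fm]) (auto intro!: nn_integral_cong eF)
qed



lemma integrable_bdd:
  fixes h :: "'a \<Rightarrow> real"
  assumes "prob_space N" "sets N = sets MX" "h \<in> borel_measurable MX" "\<forall>x\<in>space MX. \<bar>h x\<bar> \<le> c"
  shows "integrable N h"
proof -
  interpret prob_space N by fact
  have sp: "space N = space MX" using assms(2) sets_eq_imp_space_eq by blast
  have m: "h \<in> borel_measurable N" by (subst measurable_cong_sets[OF assms(2) refl]) (rule assms(3))
  show ?thesis
    by (rule integrable_const_bound[where B=c]) (use assms(4) sp m in \<open>auto intro!: AE_I2\<close>)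
qed

lemma indep_rv_emeasure:
  assumes M: "prob_space M" and I: "indep_rv M MA A MB B" and S: "S \<in> sets MA" and T: "T \<in> sets MB"
  shows "emeasure M ((A -` S \<inter> space M) \<inter> (B -` T \<inter> space M))
       = emeasure M (A -` S \<inter> space M) * emeasure M (B -` T \<inter> space M)"
proof -
  interpret prob_space M by fact
  have "prob ((A -` S \<inter> space M) \<inter> (B -` T \<inter> space M)) = prob (A -` S \<inter> space M) * prob (B -` T \<inter> space M)"
    by (rule indep_setD[OF I[unfolded indep_rv_def]]) (use S T in auto)
  then show ?thesis by (simp add: emeasure_eq_measure ennreal_mult)
qed

lemma indep_prod:
  assumes M: "prob_space M" and A: "A \<in> M \<rightarrow>\<^sub>M MA" and B: "B \<in> M \<rightarrow>\<^sub>M MB"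
    and ind: "\<And>S T. S \<in> sets MA \<Longrightarrow> T \<in> sets MB \<Longrightarrow> emeasure M ((A -` S \<inter> space M) \<inter> (B -` T \<inter> space M))
       = emeasure M (A -` S \<inter> space M) * emeasure M (B -` T \<inter> space M)"
  shows "distr M MA A \<Otimes>\<^sub>M distr M MB B = distr M (MA \<Otimes>\<^sub>M MB) (\<lambda>\<omega>. (A \<omega>, B \<omega>))"
proof (rule pair_measure_eqI)
  show "sigma_finite_measure (distr M MA A)"
    by (rule prob_space_imp_sigma_finite[OF prob_space.prob_space_distr[OF M A]])
  show "sigma_finite_measure (distr M MB B)"
    by (rule prob_space_imp_sigma_finite[OF prob_space.prob_space_distr[OF M B]])
  show "sets (distr M MA A \<Otimes>\<^sub>M distr M MB B) = sets (distr M (MA \<Otimes>\<^sub>M MB) (\<lambda>\<omega>. (A \<omega>, B \<omega>)))"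
    by simp
  fix S T assume S: "S \<in> sets (distr M MA A)" and T: "T \<in> sets (distr M MB B)"
  then have S': "S \<in> sets MA" and T': "T \<in> sets MB" by auto
  have e: "(\<lambda>\<omega>. (A \<omega>, B \<omega>)) -` (S \<times> T) \<inter> space M = (A -` S \<inter> space M) \<inter> (B -` T \<inter> space M)" by auto
  show "emeasure (distr M MA A) S * emeasure (distr M MB B) T = emeasure (distr M (MA \<Otimes>\<^sub>M MB) (\<lambda>\<omega>. (A \<omega>, B \<omega>))) (S \<times> T)"
    using S' T' A B by (simp add: emeasure_distr e ind)
qed



lemma slice_kernel:
  fixes h :: "_ \<Rightarrow> real"
  assumes Km: "K \<in> MY \<rightarrow>\<^sub>M prob_algebra MX" and y: "y \<in> space MY" and z: "z \<in> space MZ"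
  shows "W \<in> sets (MX \<Otimes>\<^sub>M MZ) \<Longrightarrow> emeasure (distr (K y) (MX \<Otimes>\<^sub>M MZ) (\<lambda>x. (x, z))) W
            = emeasure (K y) {x \<in> space MX. (x, z) \<in> W}"
    and "h \<in> borel_measurable (MX \<Otimes>\<^sub>M MZ) \<Longrightarrow> integral\<^sup>L (distr (K y) (MX \<Otimes>\<^sub>M MZ) (\<lambda>x. (x, z))) h
            = (\<integral>x. h (x, z) \<partial>K y)"
proof -
  have sp: "space (K y) = space MX" "sets (K y) = sets MX" using kernel_space[OF Km y] by auto
  have m: "(\<lambda>x. (x, z)) \<in> K y \<rightarrow>\<^sub>M MX \<Otimes>\<^sub>M MZ"
    using measurable_Pair2'[OF z, of MX] by (simp add: measurable_cong_sets[OF sp(2) refl])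
  { assume W: "W \<in> sets (MX \<Otimes>\<^sub>M MZ)"
    have "emeasure (distr (K y) (MX \<Otimes>\<^sub>M MZ) (\<lambda>x. (x, z))) W = emeasure (K y) ((\<lambda>x. (x, z)) -` W \<inter> space (K y))"
      by (rule emeasure_distr[OF m W])
    also have "(\<lambda>x. (x, z)) -` W \<inter> space (K y) = {x \<in> space MX. (x, z) \<in> W}"
      using sp(1) by auto
    finally show "emeasure (distr (K y) (MX \<Otimes>\<^sub>M MZ) (\<lambda>x. (x, z))) W = emeasure (K y) {x \<in> space MX. (x, z) \<in> W}" . }
  { assume "h \<in> borel_measurable (MX \<Otimes>\<^sub>M MZ)"
    then show "integral\<^sup>L (distr (K y) (MX \<Otimes>\<^sub>M MZ) (\<lambda>x. (x, z))) h = (\<integral>x. h (x, z) \<partial>K y)"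
      by (rule integral_distr[OF m]) }
qed

theorem lemma4:
  fixes M :: "'w measure"
    and MX :: "'a::order measure" and MY :: "'b::order measure" and MZ :: "'c::order measure"
    and X :: "'w \<Rightarrow> 'a" and Y :: "'w \<Rightarrow> 'b" and Z :: "'w \<Rightarrow> 'c"
  assumes "prob_space M"
    and "X \<in> M \<rightarrow>\<^sub>M MX" and "Y \<in> M \<rightarrow>\<^sub>M MY" and "Z \<in> M \<rightarrow>\<^sub>M MZ"
    and "stoch_incr M MX X MY Y"
    and "indep_rv M (MX \<Otimes>\<^sub>M MY) (\<lambda>\<omega>. (X \<omega>, Y \<omega>)) MZ Z"
  shows "stoch_incr M (MX \<Otimes>\<^sub>M MZ) (\<lambda>\<omega>. (X \<omega>, Z \<omega>)) MY Y \<and>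
         stoch_incr M (MX \<Otimes>\<^sub>M MZ) (\<lambda>\<omega>. (X \<omega>, Z \<omega>)) (MY \<Otimes>\<^sub>M MZ) (\<lambda>\<omega>. (Y \<omega>, Z \<omega>))"
proof -
  note Mp = assms(1)
  note Xm[measurable] = assms(2) and Ym[measurable] = assms(3) and Zm[measurable] = assms(4)
  from assms(5) obtain K where K: "regular_cond_prob M MX X MY Y K"
    and mono0: "\<forall>h::'a \<Rightarrow> real.
           h \<in> borel_measurable MX \<and> (\<exists>c. \<forall>x\<in>space MX. \<bar>h x\<bar> \<le> c) \<and>
           (\<forall>x\<in>space MX. \<forall>y\<in>space MX. x \<le> y \<longrightarrow> h x \<le> h y) \<longrightarrow>
           (\<forall>b\<in>space MY. \<forall>b'\<in>space MY. b \<le> b' \<longrightarrow>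
              (\<integral>x. h x \<partial>K b) \<le> (\<integral>x. h x \<partial>K b'))"
    unfolding stoch_incr_def by blast
  have mono: "(\<integral>x. h x \<partial>K b) \<le> (\<integral>x. h x \<partial>K b')"
    if "h \<in> borel_measurable MX" "\<forall>x\<in>space MX. \<bar>h x\<bar> \<le> c"
       "\<forall>x\<in>space MX. \<forall>y\<in>space MX. x \<le> y \<longrightarrow> h x \<le> h y"
       "b \<in> space MY" "b' \<in> space MY" "b \<le> b'" for h :: "'a \<Rightarrow> real" and c b b'
    using mono0 that by blast
  have Km[measurable]: "K \<in> MY \<rightarrow>\<^sub>M prob_algebra MX" using K unfolding regular_cond_prob_def by blast
  define PY where "PY = distr M MY Y"
  define PZ where "PZ = distr M MZ Z"
  define PXY where "PXY = distr M (MX \<Otimes>\<^sub>M MY) (\<lambda>\<omega>. (X \<omega>, Y \<omega>))"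
  have XYm[measurable]: "(\<lambda>\<omega>. (X \<omega>, Y \<omega>)) \<in> M \<rightarrow>\<^sub>M MX \<Otimes>\<^sub>M MY" by measurable
  have PZs: "PZ \<in> space (prob_algebra MZ)" unfolding PZ_def by (rule distr_in_prob_algebra[OF Mp Zm])
  have PYp: "prob_space PY" unfolding PY_def by (rule prob_space.prob_space_distr[OF Mp Ym])
  have PZp: "prob_space PZ" unfolding PZ_def by (rule prob_space.prob_space_distr[OF Mp Zm])
  have PXYp: "prob_space PXY" unfolding PXY_def by (rule prob_space.prob_space_distr[OF Mp XYm])
  have J: "PXY \<Otimes>\<^sub>M PZ = distr M ((MX \<Otimes>\<^sub>M MY) \<Otimes>\<^sub>M MZ) (\<lambda>\<omega>. ((X \<omega>, Y \<omega>), Z \<omega>))"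
    unfolding PXY_def PZ_def
    by (rule indep_prod[OF Mp XYm Zm indep_rv_emeasure[OF Mp assms(6)]])
  interpret XZ: pair_sigma_finite PXY PZ
    unfolding pair_sigma_finite_def using PXYp PZp by (auto intro: prob_space_imp_sigma_finite)
  interpret YZ: pair_sigma_finite PY PZ
    unfolding pair_sigma_finite_def using PYp PZp by (auto intro: prob_space_imp_sigma_finite)
  have spPZ: "space PZ = space MZ" "space PY = space MY" unfolding PZ_def PY_def by auto

  have C: "emeasure M {\<omega>\<in>space M. ((X \<omega>, Y \<omega>), Z \<omega>) \<in> V}
       = (\<integral>\<^sup>+z. \<integral>\<^sup>+y. emeasure (K y) {x\<in>space MX. ((x, y), z) \<in> V} \<partial>PY \<partial>PZ)"
    if V: "V \<in> sets ((MX \<Otimes>\<^sub>M MY) \<Otimes>\<^sub>M MZ)" for V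
  proof -
    have mm: "(\<lambda>\<omega>. ((X \<omega>, Y \<omega>), Z \<omega>)) \<in> M \<rightarrow>\<^sub>M (MX \<Otimes>\<^sub>M MY) \<Otimes>\<^sub>M MZ" by measurable
    have "emeasure M {\<omega>\<in>space M. ((X \<omega>, Y \<omega>), Z \<omega>) \<in> V} = emeasure (PXY \<Otimes>\<^sub>M PZ) V"
      unfolding J using emeasure_distr[OF mm V] by (auto intro!: arg_cong2[where f=emeasure])
    also have "\<dots> = (\<integral>\<^sup>+z. emeasure PXY ((\<lambda>p. (p, z)) -` V) \<partial>PZ)"
      by (rule XZ.emeasure_pair_measure_alt2) (use V in \<open>simp add: PXY_def PZ_def\<close>)
    also have "\<dots> = (\<integral>\<^sup>+z. \<integral>\<^sup>+y. emeasure (K y) {x\<in>space MX. ((x, y), z) \<in> V} \<partial>PY \<partial>PZ)"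
    proof (rule nn_integral_cong)
      fix z assume "z \<in> space PZ"
      then have z: "z \<in> space MZ" by (simp add: spPZ)
      have Vz: "(\<lambda>p. (p, z)) -` V \<in> sets (MX \<Otimes>\<^sub>M MY)" by (rule sets_Pair2[OF V])
      show "emeasure PXY ((\<lambda>p. (p, z)) -` V) = (\<integral>\<^sup>+y. emeasure (K y) {x\<in>space MX. ((x, y), z) \<in> V} \<partial>PY)"
        unfolding PXY_def PY_def by (subst disint[OF Mp Xm Ym K Vz]) simp
    qed
    finally show ?thesis .
  qed

  have Gm[measurable]: "(\<lambda>p. distr (K (fst p)) (MX \<Otimes>\<^sub>M MZ) (\<lambda>x. (x, snd p))) \<in> (MY \<Otimes>\<^sub>M MZ) \<rightarrow>\<^sub>M prob_algebra (MX \<Otimes>\<^sub>M MZ)"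
    by measurable
  have sm: "(\<lambda>p. emeasure (K (fst p)) {x\<in>space MX. (x, snd p) \<in> W}) \<in> borel_measurable (MY \<Otimes>\<^sub>M MZ)"
    if W: "W \<in> sets (MX \<Otimes>\<^sub>M MZ)" for W
  proof -
    have "(\<lambda>p. emeasure (distr (K (fst p)) (MX \<Otimes>\<^sub>M MZ) (\<lambda>x. (x, snd p))) W) \<in> borel_measurable (MY \<Otimes>\<^sub>M MZ)"
      by (rule measurable_emeasure_kernel[OF measurable_prob_algebraD[OF Gm] W])
    then show ?thesis
      by (rule measurable_cong[THEN iffD1, rotated])
         (auto simp: space_pair_measure slice_kernel(1)[OF Km _ _ W])
  qed

  define K1 where "K1 = (\<lambda>y. K y \<Otimes>\<^sub>M PZ)"
  have K1m: "K1 \<in> MY \<rightarrow>\<^sub>M prob_algebra (MX \<Otimes>\<^sub>M MZ)"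
    unfolding K1_def by (rule measurable_pair_prob[OF Km measurable_const[OF PZs]])
  have eK1: "emeasure (K1 y) W = (\<integral>\<^sup>+z. emeasure (K y) {x\<in>space MX. (x, z) \<in> W} \<partial>PZ)"
    if y: "y \<in> space MY" and W: "W \<in> sets (MX \<Otimes>\<^sub>M MZ)" for y W
  proof -
    have sp: "space (K y) = space MX" "sets (K y) = sets MX" "prob_space (K y)" using kernel_space[OF Km y] by auto
    interpret KZ: pair_sigma_finite "K y" PZ
      unfolding pair_sigma_finite_def using sp(3) PZp by (auto intro: prob_space_imp_sigma_finite)
    have "emeasure (K1 y) W = (\<integral>\<^sup>+z. emeasure (K y) ((\<lambda>x. (x, z)) -` W) \<partial>PZ)"
      unfolding K1_def by (rule KZ.emeasure_pair_measure_alt2) (use W sp in \<open>simp add: PZ_def\<close>)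
    also have "\<dots> = (\<integral>\<^sup>+z. emeasure (K y) {x\<in>space MX. (x, z) \<in> W} \<partial>PZ)"
    proof (rule nn_integral_cong)
      fix z
      have "W \<subseteq> space MX \<times> space MZ" using sets.sets_into_space[OF W] by (simp add: space_pair_measure)
      then have "(\<lambda>x. (x, z)) -` W = {x\<in>space MX. (x, z) \<in> W}" by auto
      then show "emeasure (K y) ((\<lambda>x. (x, z)) -` W) = emeasure (K y) {x\<in>space MX. (x, z) \<in> W}" by simp
    qed
    finally show ?thesis .
  qed
  have rcp1: "regular_cond_prob M (MX \<Otimes>\<^sub>M MZ) (\<lambda>\<omega>. (X \<omega>, Z \<omega>)) MY Y K1"
    unfolding regular_cond_prob_def
  proof (intro conjI K1m ballI)
    fix W T assume W: "W \<in> sets (MX \<Otimes>\<^sub>M MZ)" and T: "T \<in> sets MY"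
    define V where "V = {q \<in> space ((MX \<Otimes>\<^sub>M MY) \<Otimes>\<^sub>M MZ). (fst (fst q), snd q) \<in> W \<and> snd (fst q) \<in> T}"
    have V: "V \<in> sets ((MX \<Otimes>\<^sub>M MY) \<Otimes>\<^sub>M MZ)" unfolding V_def using W T by measurable
    note smW[measurable] = sm[OF W]
    have fm: "(\<lambda>(y, z). indicator T y * emeasure (K y) {x\<in>space MX. (x, z) \<in> W}) \<in> borel_measurable (PY \<Otimes>\<^sub>M PZ)"
    proof -
      have "(\<lambda>p. indicator T (fst p) * emeasure (K (fst p)) {x\<in>space MX. (x, snd p) \<in> W}) \<in> borel_measurable (MY \<Otimes>\<^sub>M MZ)"
        using T by measurable
      then show ?thesis
        by (simp add: case_prod_beta' measurable_cong_sets[OF sets_pair_measure_cong[of PY MY PZ MZ] refl] PY_def PZ_def)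
    qed
    have "emeasure M {\<omega>\<in>space M. (X \<omega>, Z \<omega>) \<in> W \<and> Y \<omega> \<in> T} = emeasure M {\<omega>\<in>space M. ((X \<omega>, Y \<omega>), Z \<omega>) \<in> V}"
      unfolding V_def
      by (intro arg_cong2[where f=emeasure] refl)
         (auto simp: space_pair_measure measurable_space[OF Xm] measurable_space[OF Ym] measurable_space[OF Zm])
    also have "\<dots> = (\<integral>\<^sup>+z. \<integral>\<^sup>+y. emeasure (K y) {x\<in>space MX. ((x, y), z) \<in> V} \<partial>PY \<partial>PZ)"
      by (rule C[OF V])
    also have "\<dots> = (\<integral>\<^sup>+z. \<integral>\<^sup>+y. indicator T y * emeasure (K y) {x\<in>space MX. (x, z) \<in> W} \<partial>PY \<partial>PZ)"
    proof (intro nn_integral_cong)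
      fix z y assume z: "z \<in> space PZ" and y: "y \<in> space PY"
      show "emeasure (K y) {x\<in>space MX. ((x, y), z) \<in> V} = indicator T y * emeasure (K y) {x\<in>space MX. (x, z) \<in> W}"
      proof (cases "y \<in> T")
        case True
        then have "{x\<in>space MX. ((x, y), z) \<in> V} = {x\<in>space MX. (x, z) \<in> W}"
          using y z by (auto simp: V_def space_pair_measure spPZ)
        then show ?thesis using True by simp
      next
        case False
        have e: "{x\<in>space MX. ((x, y), z) \<in> V} = {}" using False by (auto simp: V_def)
        show ?thesis unfolding e using False by simp
      qed
    qed
    also have "\<dots> = (\<integral>\<^sup>+y. \<integral>\<^sup>+z. indicator T y * emeasure (K y) {x\<in>space MX. (x, z) \<in> W} \<partial>PZ \<partial>PY)"
      by (rule YZ.Fubini'[OF fm])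
    also have "\<dots> = (\<integral>\<^sup>+y. indicator T y * emeasure (K1 y) W \<partial>PY)"
    proof (rule nn_integral_cong)
      fix y assume "y \<in> space PY"
      then have y: "y \<in> space MY" by (simp add: spPZ)
      show "(\<integral>\<^sup>+z. indicator T y * emeasure (K y) {x\<in>space MX. (x, z) \<in> W} \<partial>PZ) = indicator T y * emeasure (K1 y) W"
        by (cases "y \<in> T") (simp_all add: eK1[OF y W])
    qed
    finally show "emeasure M {\<omega>\<in>space M. (X \<omega>, Z \<omega>) \<in> W \<and> Y \<omega> \<in> T} = (\<integral>\<^sup>+y. indicator T y * emeasure (K1 y) W \<partial>distr M MY Y)"
      by (simp add: PY_def)
  qed
  have part1: "stoch_incr M (MX \<Otimes>\<^sub>M MZ) (\<lambda>\<omega>. (X \<omega>, Z \<omega>)) MY Y"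
    unfolding stoch_incr_def
  proof (rule exI[of _ K1], intro conjI rcp1 allI impI ballI)
    fix h :: "'a \<times> 'c \<Rightarrow> real" and y y'
    assume H: "h \<in> borel_measurable (MX \<Otimes>\<^sub>M MZ) \<and> (\<exists>c. \<forall>x\<in>space (MX \<Otimes>\<^sub>M MZ). \<bar>h x\<bar> \<le> c) \<and>
           (\<forall>x\<in>space (MX \<Otimes>\<^sub>M MZ). \<forall>y\<in>space (MX \<Otimes>\<^sub>M MZ). x \<le> y \<longrightarrow> h x \<le> h y)"
      and y: "y \<in> space MY" and y': "y' \<in> space MY" and yy: "y \<le> y'"
    have hm[measurable]: "h \<in> borel_measurable (MX \<Otimes>\<^sub>M MZ)" using H by (elim conjE)
    have hmono: "\<forall>x\<in>space (MX \<Otimes>\<^sub>M MZ). \<forall>y\<in>space (MX \<Otimes>\<^sub>M MZ). x \<le> y \<longrightarrow> h x \<le> h y"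
      using H by (elim conjE)
    from H obtain c where hc: "\<forall>x\<in>space (MX \<Otimes>\<^sub>M MZ). \<bar>h x\<bar> \<le> c" by (elim conjE exE)
    have I: "integral\<^sup>L (K1 u) h = (\<integral>z. (\<integral>x. h (x, z) \<partial>K u) \<partial>PZ)"
      and Iint: "integrable PZ (\<lambda>z. \<integral>x. h (x, z) \<partial>K u)"
      if u: "u \<in> space MY" for u
    proof -
      have sp: "space (K u) = space MX" "sets (K u) = sets MX" "prob_space (K u)" using kernel_space[OF Km u] by auto
      interpret KZ: pair_sigma_finite "K u" PZ
        unfolding pair_sigma_finite_def using sp(3) PZp by (auto intro: prob_space_imp_sigma_finite)
      have "integrable (K u \<Otimes>\<^sub>M PZ) h"
        by (rule integrable_bdd[OF prob_space_pair[OF sp(3) PZp] _ hm hc]) (simp add: sp PZ_def)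
      then have hi: "integrable (K u \<Otimes>\<^sub>M PZ) (\<lambda>(x, z). h (x, z))" by (simp add: case_prod_beta')
      show "integral\<^sup>L (K1 u) h = (\<integral>z. (\<integral>x. h (x, z) \<partial>K u) \<partial>PZ)"
        using KZ.integral_snd[OF hi] by (simp add: K1_def case_prod_beta')
      show "integrable PZ (\<lambda>z. \<integral>x. h (x, z) \<partial>K u)"
        by (rule KZ.integrable_snd[OF hi])
    qed
    have "(\<integral>z. (\<integral>x. h (x, z) \<partial>K y) \<partial>PZ) \<le> (\<integral>z. (\<integral>x. h (x, z) \<partial>K y') \<partial>PZ)"
    proof (rule integral_mono[OF Iint[OF y] Iint[OF y']])
      fix z assume "z \<in> space PZ"
      then have z: "z \<in> space MZ" by (simp add: spPZ)
      show "(\<integral>x. h (x, z) \<partial>K y) \<le> (\<integral>x. h (x, z) \<partial>K y')"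
      proof (rule mono[where c=c, OF _ _ _ y y' yy])
        show "(\<lambda>x. h (x, z)) \<in> borel_measurable MX" by (rule measurable_Pair1[OF hm z])
        show "\<forall>x\<in>space MX. \<bar>h (x, z)\<bar> \<le> c" using hc z by (auto simp: space_pair_measure)
        show "\<forall>x\<in>space MX. \<forall>x'\<in>space MX. x \<le> x' \<longrightarrow> h (x, z) \<le> h (x', z)"
          using hmono z by (auto simp: space_pair_measure less_eq_prod_def)
      qed
    qed
    then show "(\<integral>x. h x \<partial>K1 y) \<le> (\<integral>x. h x \<partial>K1 y')" by (simp add: I[OF y] I[OF y'])
  qed

  define K2 where "K2 = (\<lambda>p. distr (K (fst p)) (MX \<Otimes>\<^sub>M MZ) (\<lambda>x. (x, snd p)))"
  have K2m: "K2 \<in> (MY \<Otimes>\<^sub>M MZ) \<rightarrow>\<^sub>M prob_algebra (MX \<Otimes>\<^sub>M MZ)" unfolding K2_def by (rule Gm)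
  have PYZ: "PY \<Otimes>\<^sub>M PZ = distr M (MY \<Otimes>\<^sub>M MZ) (\<lambda>\<omega>. (Y \<omega>, Z \<omega>))"
    unfolding PY_def PZ_def
  proof (rule indep_prod[OF Mp Ym Zm])
    fix S T assume S: "S \<in> sets MY" and T: "T \<in> sets MZ"
    have e: "Y -` S \<inter> space M = (\<lambda>\<omega>. (X \<omega>, Y \<omega>)) -` (space MX \<times> S) \<inter> space M"
      using measurable_space[OF Xm] by auto
    have S': "space MX \<times> S \<in> sets (MX \<Otimes>\<^sub>M MY)" using S by simp
    show "emeasure M ((Y -` S \<inter> space M) \<inter> (Z -` T \<inter> space M)) = emeasure M (Y -` S \<inter> space M) * emeasure M (Z -` T \<inter> space M)"
      unfolding e by (rule indep_rv_emeasure[OF Mp assms(6) S' T])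
  qed
  have rcp2: "regular_cond_prob M (MX \<Otimes>\<^sub>M MZ) (\<lambda>\<omega>. (X \<omega>, Z \<omega>)) (MY \<Otimes>\<^sub>M MZ) (\<lambda>\<omega>. (Y \<omega>, Z \<omega>)) K2"
    unfolding regular_cond_prob_def
  proof (intro conjI K2m ballI)
    fix W T assume W: "W \<in> sets (MX \<Otimes>\<^sub>M MZ)" and T: "T \<in> sets (MY \<Otimes>\<^sub>M MZ)"
    define V where "V = {q \<in> space ((MX \<Otimes>\<^sub>M MY) \<Otimes>\<^sub>M MZ). (fst (fst q), snd q) \<in> W \<and> (snd (fst q), snd q) \<in> T}"
    have V: "V \<in> sets ((MX \<Otimes>\<^sub>M MY) \<Otimes>\<^sub>M MZ)" unfolding V_def using W T by measurable
    note smW[measurable] = sm[OF W]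
    have fm: "(\<lambda>p. indicator T p * emeasure (K (fst p)) {x\<in>space MX. (x, snd p) \<in> W}) \<in> borel_measurable (PY \<Otimes>\<^sub>M PZ)"
    proof -
      have "(\<lambda>p. indicator T p * emeasure (K (fst p)) {x\<in>space MX. (x, snd p) \<in> W}) \<in> borel_measurable (MY \<Otimes>\<^sub>M MZ)"
        using T by measurable
      then show ?thesis
        by (simp add: measurable_cong_sets[OF sets_pair_measure_cong[of PY MY PZ MZ] refl] PY_def PZ_def)
    qed
    have "emeasure M {\<omega>\<in>space M. (X \<omega>, Z \<omega>) \<in> W \<and> (Y \<omega>, Z \<omega>) \<in> T} = emeasure M {\<omega>\<in>space M. ((X \<omega>, Y \<omega>), Z \<omega>) \<in> V}"
      unfolding V_def
      by (intro arg_cong2[where f=emeasure] refl)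
         (auto simp: space_pair_measure measurable_space[OF Xm] measurable_space[OF Ym] measurable_space[OF Zm])
    also have "\<dots> = (\<integral>\<^sup>+z. \<integral>\<^sup>+y. emeasure (K y) {x\<in>space MX. ((x, y), z) \<in> V} \<partial>PY \<partial>PZ)"
      by (rule C[OF V])
    also have "\<dots> = (\<integral>\<^sup>+z. \<integral>\<^sup>+y. indicator T (y, z) * emeasure (K (fst (y, z))) {x\<in>space MX. (x, snd (y, z)) \<in> W} \<partial>PY \<partial>PZ)"
    proof (intro nn_integral_cong)
      fix z y assume z: "z \<in> space PZ" and y: "y \<in> space PY"
      show "emeasure (K y) {x\<in>space MX. ((x, y), z) \<in> V} = indicator T (y, z) * emeasure (K (fst (y, z))) {x\<in>space MX. (x, snd (y, z)) \<in> W}"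
      proof (cases "(y, z) \<in> T")
        case True
        then have "{x\<in>space MX. ((x, y), z) \<in> V} = {x\<in>space MX. (x, z) \<in> W}"
          using y z by (auto simp: V_def space_pair_measure spPZ)
        then show ?thesis using True by simp
      next
        case False
        have e: "{x\<in>space MX. ((x, y), z) \<in> V} = {}" using False by (auto simp: V_def)
        show ?thesis unfolding e using False by simp
      qed
    qed
    also have "\<dots> = (\<integral>\<^sup>+p. indicator T p * emeasure (K (fst p)) {x\<in>space MX. (x, snd p) \<in> W} \<partial>(PY \<Otimes>\<^sub>M PZ))"
      by (rule YZ.nn_integral_snd[OF fm])
    also have "\<dots> = (\<integral>\<^sup>+p. indicator T p * emeasure (K2 p) W \<partial>distr M (MY \<Otimes>\<^sub>M MZ) (\<lambda>\<omega>. (Y \<omega>, Z \<omega>)))"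
      unfolding PYZ[symmetric]
    proof (rule nn_integral_cong)
      fix p assume "p \<in> space (PY \<Otimes>\<^sub>M PZ)"
      then have p1: "fst p \<in> space MY" and p2: "snd p \<in> space MZ" by (auto simp: space_pair_measure spPZ)
      show "indicator T p * emeasure (K (fst p)) {x\<in>space MX. (x, snd p) \<in> W} = indicator T p * emeasure (K2 p) W"
        unfolding K2_def by (simp add: slice_kernel(1)[OF Km p1 p2 W])
    qed
    finally show "emeasure M {\<omega>\<in>space M. (X \<omega>, Z \<omega>) \<in> W \<and> (Y \<omega>, Z \<omega>) \<in> T}
        = (\<integral>\<^sup>+p. indicator T p * emeasure (K2 p) W \<partial>distr M (MY \<Otimes>\<^sub>M MZ) (\<lambda>\<omega>. (Y \<omega>, Z \<omega>)))" .
  qed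
  have part2: "stoch_incr M (MX \<Otimes>\<^sub>M MZ) (\<lambda>\<omega>. (X \<omega>, Z \<omega>)) (MY \<Otimes>\<^sub>M MZ) (\<lambda>\<omega>. (Y \<omega>, Z \<omega>))"
    unfolding stoch_incr_def
  proof (rule exI[of _ K2], intro conjI rcp2 allI impI ballI)
    fix h :: "'a \<times> 'c \<Rightarrow> real" and p p'
    assume H: "h \<in> borel_measurable (MX \<Otimes>\<^sub>M MZ) \<and> (\<exists>c. \<forall>x\<in>space (MX \<Otimes>\<^sub>M MZ). \<bar>h x\<bar> \<le> c) \<and>
           (\<forall>x\<in>space (MX \<Otimes>\<^sub>M MZ). \<forall>y\<in>space (MX \<Otimes>\<^sub>M MZ). x \<le> y \<longrightarrow> h x \<le> h y)"
      and p: "p \<in> space (MY \<Otimes>\<^sub>M MZ)" and p': "p' \<in> space (MY \<Otimes>\<^sub>M MZ)" and pp: "p \<le> p'"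
    have hm[measurable]: "h \<in> borel_measurable (MX \<Otimes>\<^sub>M MZ)" using H by (elim conjE)
    have hmono: "\<forall>x\<in>space (MX \<Otimes>\<^sub>M MZ). \<forall>y\<in>space (MX \<Otimes>\<^sub>M MZ). x \<le> y \<longrightarrow> h x \<le> h y"
      using H by (elim conjE)
    from H obtain c where hc: "\<forall>x\<in>space (MX \<Otimes>\<^sub>M MZ). \<bar>h x\<bar> \<le> c" by (elim conjE exE)
    obtain y z where pyz: "p = (y, z)" by (cases p)
    obtain y' z' where pyz': "p' = (y', z')" by (cases p')
    have y: "y \<in> space MY" and z: "z \<in> space MZ" using p pyz by (auto simp: space_pair_measure)
    have y': "y' \<in> space MY" and z': "z' \<in> space MZ" using p' pyz' by (auto simp: space_pair_measure)
    have yy: "y \<le> y'" and zz: "z \<le> z'" using pp pyz pyz' by (auto simp: less_eq_prod_def)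
    have hz: "(\<lambda>x. h (x, z)) \<in> borel_measurable MX" by (rule measurable_Pair1[OF hm z])
    have hz': "(\<lambda>x. h (x, z')) \<in> borel_measurable MX" by (rule measurable_Pair1[OF hm z'])
    have cz: "\<forall>x\<in>space MX. \<bar>h (x, z)\<bar> \<le> c" using hc z by (auto simp: space_pair_measure)
    have cz': "\<forall>x\<in>space MX. \<bar>h (x, z')\<bar> \<le> c" using hc z' by (auto simp: space_pair_measure)
    have "(\<integral>x. h (x, z) \<partial>K y) \<le> (\<integral>x. h (x, z) \<partial>K y')"
    proof (rule mono[where c=c, OF hz cz _ y y' yy])
      show "\<forall>x\<in>space MX. \<forall>x'\<in>space MX. x \<le> x' \<longrightarrow> h (x, z) \<le> h (x', z)"
        using hmono z by (auto simp: space_pair_measure less_eq_prod_def)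
    qed
    also have "\<dots> \<le> (\<integral>x. h (x, z') \<partial>K y')"
    proof (rule integral_mono)
      have sp: "space (K y') = space MX" "sets (K y') = sets MX" "prob_space (K y')" using kernel_space[OF Km y'] by auto
      show "integrable (K y') (\<lambda>x. h (x, z))" by (rule integrable_bdd[OF sp(3) sp(2) hz cz])
      show "integrable (K y') (\<lambda>x. h (x, z'))" by (rule integrable_bdd[OF sp(3) sp(2) hz' cz'])
      fix x assume "x \<in> space (K y')"
      then have x: "x \<in> space MX" using sp by simp
      show "h (x, z) \<le> h (x, z')" using hmono x z z' zz by (auto simp: space_pair_measure less_eq_prod_def)
    qed
    finally show "(\<integral>x. h x \<partial>K2 p) \<le> (\<integral>x. h x \<partial>K2 p')"
      unfolding pyz pyz' K2_def using slice_kernel(2)[OF Km y z hm] slice_kernel(2)[OF Km y' z' hm] by simp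
  qed
  show ?thesis using part1 part2 by blast
qed

end
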